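(* Let $A$ be a finite alphabet. Every regular function $f : A^* \to \mathbb{N}$ is $k$-repetitive for all integers $k \ge 1$.
   Context: A bimachine is a tuple $(A, M, \mu, \lambda)$ where $A$ is a finite alphabet, $M$ a finite monoid, $\mu : A^* \to M$ a monoid morphism and $\lambda : M \times A \times M \to \mathbb{N}$; it computes $f(w) = \sum_{i=1}^{|w|} \lambda(\mu(w[1{:}i-1]), w[i], \mu(w[i+1{:}|w|]))$. A function $A^* \to \mathbb{N}$ is regular if it is computed by a bimachine. For $k \ge 1$, a function $f : A^* \to \mathbb{N}$ is $k$-repetitive if there exists an integer $\omega_0 \ge 1$ such that for all words $\alpha, \beta, \alpha_0, u_1, \alpha_1, \dots, u_k, \alpha_k \in A^*$ and every positive multiple $\omega$ of $\omega_0$, setting $W(Z_1,\dots,Z_k) = \alpha_0 \prod_{i=1}^k u_i^{\omega Z_i} \alpha_i$ and $w = W(1,\dots,1)$, there exists a function $F : \mathbb{N}^k \to \mathbb{N}$ such that for all integers $X_1,\dots,X_k,Y_1,\dots,Y_k \ge 3$, $f(\alpha\, w^{2\omega-1} W(X_1,\dots,X_k)\, w^{\omega-1}\, W(Y_1,\dots,Y_k)\, w^{\omega}\, \beta) = F(X_1+Y_1, \dots, X_k+Y_k)$. *)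

theory Defs
  imports Main
begin

definition wpow :: "'a list \<Rightarrow> nat \<Rightarrow> 'a list" where
  "wpow u n = concat (replicate n u)"

definition monoid_morphism :: "('a list \<Rightarrow> 'm::monoid_mult) \<Rightarrow> bool" where
  "monoid_morphism mu \<longleftrightarrow> mu [] = 1 \<and> (\<forall>u v. mu (u @ v) = mu u * mu v)"

text \<open>Function computed by the bimachine (A, M, mu, lambda):
  f(w) = sum_{i=1}^{|w|} lambda(mu(w[1:i-1]), w[i], mu(w[i+1:|w|])), written 0-indexed.\<close>
definition bimachine_fun ::
  "('a list \<Rightarrow> 'm::monoid_mult) \<Rightarrow> ('m \<Rightarrow> 'a \<Rightarrow> 'm \<Rightarrow> nat) \<Rightarrow> 'a list \<Rightarrow> nat" where
  "bimachine_fun mu lam w =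
     (\<Sum>i<length w. lam (mu (take i w)) (w ! i) (mu (drop (Suc i) w)))"

text \<open>W(Z_1..Z_k) = alpha_0 u_1^{omega Z_1} alpha_1 ... u_k^{omega Z_k} alpha_k,
  with us = [u_1..u_k], als = [alpha_1..alpha_k], Z = [Z_1..Z_k].\<close>
definition Wword :: "'a list \<Rightarrow> 'a list list \<Rightarrow> 'a list list \<Rightarrow> nat \<Rightarrow> nat list \<Rightarrow> 'a list" where
  "Wword al0 us als \<omega> Z =
     al0 @ concat (map (\<lambda>i. wpow (us ! i) (\<omega> * Z ! i) @ als ! i) [0..<length us])"

definition k_repetitive :: "nat \<Rightarrow> ('a list \<Rightarrow> nat) \<Rightarrow> bool" where
  "k_repetitive k f \<longleftrightarrow>
     (\<exists>\<omega>0::nat. \<omega>0 \<ge> 1 \<and>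
       (\<forall>\<alpha> \<beta> al0 (us::'a list list) (als::'a list list) (\<omega>::nat).
          length us = k \<longrightarrow> length als = k \<longrightarrow> \<omega> > 0 \<longrightarrow> \<omega>0 dvd \<omega> \<longrightarrow>
          (let W = Wword al0 us als \<omega>; w = W (replicate k 1) in
           \<exists>F :: nat list \<Rightarrow> nat.
             \<forall>X Y :: nat list. length X = k \<longrightarrow> length Y = k \<longrightarrow>
               (\<forall>i<k. X ! i \<ge> 3) \<longrightarrow> (\<forall>i<k. Y ! i \<ge> 3) \<longrightarrow>
               f (\<alpha> @ wpow w (2 * \<omega> - 1) @ W X @ wpow w (\<omega> - 1) @ W Y @ wpow w \<omega> @ \<beta>)
                 = F (map2 (+) X Y))))"

end

theory Submission
  imports Defs
begin


definition bf :: "('a list \<Rightarrow> 'm::monoid_mult) \<Rightarrow> ('m \<Rightarrow> 'a \<Rightarrow> 'm \<Rightarrow> nat) \<Rightarrow> 'm \<Rightarrow> 'm \<Rightarrow> 'a list \<Rightarrow> nat" where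
  "bf mu lam l r w = (\<Sum>i<length w. lam (l * mu (take i w)) (w ! i) (mu (drop (Suc i) w) * r))"

lemma sum_split_add: "(\<Sum>i<a+b. f i) = (\<Sum>i<a. f i) + (\<Sum>i<b. f (a+i::nat))"
  by (induction b) (auto simp: add.assoc)

lemma mu_app: "monoid_morphism mu \<Longrightarrow> mu (u @ v) = mu u * mu v"
  by (simp add: monoid_morphism_def)

lemma mu_nil: "monoid_morphism mu \<Longrightarrow> mu [] = 1"
  by (simp add: monoid_morphism_def)

lemma bf_one: "monoid_morphism mu \<Longrightarrow> bimachine_fun mu lam w = bf mu lam 1 1 w"
  by (simp add: bimachine_fun_def bf_def)

lemma bf_append:
  assumes mm: "monoid_morphism mu"
  shows "bf mu lam l r (u @ v) = bf mu lam l (mu v * r) u + bf mu lam (l * mu u) r v"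
proof -
  have "bf mu lam l r (u @ v) = (\<Sum>i<length u. lam (l * mu (take i (u@v))) ((u@v) ! i) (mu (drop (Suc i) (u@v)) * r))
     + (\<Sum>i<length v. lam (l * mu (take (length u + i) (u@v))) ((u@v) ! (length u + i)) (mu (drop (Suc (length u + i)) (u@v)) * r))"
    unfolding bf_def by (simp add: sum_split_add)
  also have "(\<Sum>i<length u. lam (l * mu (take i (u@v))) ((u@v) ! i) (mu (drop (Suc i) (u@v)) * r)) = bf mu lam l (mu v * r) u"
    unfolding bf_def by (intro sum.cong refl) (simp add: mu_app[OF mm] mult.assoc nth_append)
  also have "(\<Sum>i<length v. lam (l * mu (take (length u + i) (u@v))) ((u@v) ! (length u + i)) (mu (drop (Suc (length u + i)) (u@v)) * r)) = bf mu lam (l * mu u) r v"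
    unfolding bf_def by (intro sum.cong refl) (simp add: mu_app[OF mm] mult.assoc nth_append)
  finally show ?thesis .
qed

lemma bf3:
  assumes mm: "monoid_morphism mu"
  shows "bf mu lam l r (P @ B @ Q) = bf mu lam l (mu B * mu Q * r) P + bf mu lam (l * mu P) (mu Q * r) B + bf mu lam (l * mu P * mu B) r Q"
  by (simp add: bf_append[OF mm] mu_app[OF mm] mult.assoc)

lemma mu_wpow: "monoid_morphism mu \<Longrightarrow> mu (wpow u n) = mu u ^ n"
  by (induction n) (simp_all add: wpow_def mu_app mu_nil)

lemma wpow_add: "wpow u (m + n) = wpow u m @ wpow u n"
  by (simp add: wpow_def replicate_add)

lemma pow_idem: "(y::'m::monoid_mult) * y = y \<Longrightarrow> c \<ge> 1 \<Longrightarrow> y ^ c = y"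
proof (induction c)
  case 0 then show ?case by simp
next
  case (Suc c) then show ?case by (cases c) auto
qed

lemma elem_idem: "\<exists>e\<ge>1. (x::'m::{monoid_mult,finite}) ^ e * x ^ e = x ^ e"
proof -
  have "\<not> inj (\<lambda>n::nat. x ^ n)"
  proof
    assume "inj (\<lambda>n::nat. x ^ n)"
    moreover have "finite (range (\<lambda>n::nat. x ^ n))" by simp
    ultimately have "finite (UNIV::nat set)" using finite_imageD by blast
    then show False by simp
  qed
  then obtain i j where ij: "i \<noteq> j" "x ^ i = x ^ j" unfolding inj_def by blast
  obtain i j where ij: "i < j" "x ^ i = x ^ j"
    using ij by (metis linorder_neqE_nat)
  define p where "p = j - i"
  have p: "p \<ge> 1" using ij p_def by simp
  have per: "x ^ (n + p) = x ^ n" if "n \<ge> i" for n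
  proof -
    have "x ^ (n + p) = x ^ (n - i) * x ^ j" using that ij p_def by (simp flip: power_add)
    also have "\<dots> = x ^ (n - i) * x ^ i" using ij by simp
    also have "\<dots> = x ^ n" using that by (simp flip: power_add)
    finally show ?thesis .
  qed
  have per2: "x ^ (n + p * c) = x ^ n" if "n \<ge> i" for n c
  proof (induction c)
    case 0 then show ?case by simp
  next
    case (Suc c)
    have "x ^ (n + p * Suc c) = x ^ ((n + p * c) + p)" by (simp add: algebra_simps)
    also have "\<dots> = x ^ (n + p * c)" using per that by simp
    finally show ?case using Suc by simp
  qed
  define e where "e = p * (i + 1)"
  have "e \<ge> 1" using p e_def by auto
  have "e \<ge> i" using mult_le_mono1[OF p, of "i+1"] e_def by simp
  moreover have "x ^ e * x ^ e = x ^ e"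
  proof -
    have ee: "e + e = e + p * (i + 1)" using e_def by simp
    have "x ^ e * x ^ e = x ^ (e + e)" by (simp only: power_add)
    also have "\<dots> = x ^ (e + p * (i + 1))" by (simp only: ee)
    also have "\<dots> = x ^ e" using per2[of e "i+1"] \<open>e \<ge> i\<close> by blast
    finally show ?thesis .
  qed
  ultimately show ?thesis using \<open>e \<ge> 1\<close> by blast
qed

lemma finite_idem: "\<exists>w0::nat\<ge>1. \<forall>x::'m::{monoid_mult,finite}. x ^ w0 * x ^ w0 = x ^ w0"
proof -
  obtain E where E: "\<And>x::'m. E x \<ge> 1 \<and> x ^ E x * x ^ E x = x ^ E x"
    using elem_idem by metis
  define w0 where "w0 = (\<Prod>x\<in>(UNIV::'m set). E x)"
  have "w0 \<ge> 1" unfolding w0_def using E by (simp add: Suc_le_eq prod_pos)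
  moreover have "x ^ w0 * x ^ w0 = x ^ w0" for x :: 'm
  proof -
    have "E x dvd w0" unfolding w0_def by (rule dvd_prod_eqI) auto
    then obtain c where c: "w0 = E x * c" by blast
    have "c \<ge> 1" using c \<open>w0 \<ge> 1\<close> by (cases c) auto
    have "x ^ w0 = x ^ E x" unfolding c power_mult using pow_idem E \<open>c \<ge> 1\<close> by blast
    then show ?thesis using E by simp
  qed
  ultimately show ?thesis by blast
qed



lemma pow_mult_idem:
  assumes idem: "\<forall>x::'m::monoid_mult. x ^ \<omega> * x ^ \<omega> = x ^ \<omega>" and "n \<ge> 1"
  shows "(x::'m) ^ (\<omega> * n) = x ^ \<omega>"
  unfolding power_mult using pow_idem idem assms(2) by blast

lemma increment:
  fixes mu :: "'a list \<Rightarrow> 'm::monoid_mult"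
  assumes mm: "monoid_morphism mu"
    and idem: "\<forall>x::'m::monoid_mult. x ^ \<omega> * x ^ \<omega> = x ^ \<omega>"
    and n: "n \<ge> 2"
  shows "bf mu lam l r (wpow u (\<omega> * (n + 1))) = bf mu lam l r (wpow u (\<omega> * n)) + bf mu lam (l * mu u ^ \<omega>) (mu u ^ \<omega> * r) (wpow u \<omega>)"
proof -
  define a where "a = mu u"
  have step1: "bf mu lam l' r (wpow u (\<omega> * (m + 1))) = bf mu lam l' (a ^ \<omega> * r) (wpow u \<omega>) + bf mu lam (l' * a ^ \<omega>) r (wpow u (\<omega> * m))"
    if "m \<ge> 1" for m l'
  proof -
    have "wpow u (\<omega> * (m + 1)) = wpow u \<omega> @ wpow u (\<omega> * m)"
      by (simp add: wpow_add[symmetric] algebra_simps)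
    moreover have "mu (wpow u (\<omega> * m)) = a ^ \<omega>"
      by (simp add: mu_wpow[OF mm] a_def pow_mult_idem[OF idem that])
    ultimately show ?thesis by (simp add: bf_append[OF mm] mu_wpow[OF mm] a_def)
  qed
  have aa: "l * a ^ \<omega> * a ^ \<omega> = l * a ^ \<omega>" using idem by (simp add: mult.assoc)
  obtain m where m: "n = m + 1" "m \<ge> 1" using n by (intro that[of "n - 1"]) auto
  have "bf mu lam l r (wpow u (\<omega> * (n + 1))) = bf mu lam l (a ^ \<omega> * r) (wpow u \<omega>) + bf mu lam (l * a ^ \<omega>) r (wpow u (\<omega> * (m + 1)))"
    using step1[of "m+1" l] m by simp
  also have "bf mu lam (l * a ^ \<omega>) r (wpow u (\<omega> * (m + 1))) = bf mu lam (l * a ^ \<omega>) (a ^ \<omega> * r) (wpow u \<omega>) + bf mu lam (l * a ^ \<omega>) r (wpow u (\<omega> * m))"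
    using step1[of m "l * a ^ \<omega>"] m aa by simp
  also have "bf mu lam l r (wpow u (\<omega> * n)) = bf mu lam l (a ^ \<omega> * r) (wpow u \<omega>) + bf mu lam (l * a ^ \<omega>) r (wpow u (\<omega> * m))"
    using step1[of m l] m by simp
  ultimately show ?thesis by (simp add: a_def)
qed

lemma mu_concat: "monoid_morphism mu \<Longrightarrow> mu (concat xs) = prod_list (map mu xs)"
  by (induction xs) (simp_all add: mu_app mu_nil)

lemma mu_concat_map_eq:
  "monoid_morphism mu \<Longrightarrow> (\<And>j. j \<in> set js \<Longrightarrow> mu (f j) = mu (g j)) \<Longrightarrow> mu (concat (map f js)) = mu (concat (map g js))"
  by (simp add: mu_concat comp_def cong: map_cong)

definition blk where "blk us als \<omega> Z j = wpow (us ! j) (\<omega> * Z ! j) @ als ! j"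
definition pre where "pre al0 us als \<omega> Z i = al0 @ concat (map (blk us als \<omega> Z) [0..<i])"
definition suf where "suf us als \<omega> Z i = als ! i @ concat (map (blk us als \<omega> Z) [Suc i..<length us])"

lemma W_split:
  assumes "i < length us"
  shows "Wword al0 us als \<omega> Z = pre al0 us als \<omega> Z i @ wpow (us ! i) (\<omega> * Z ! i) @ suf us als \<omega> Z i"
proof -
  have "[0..<length us] = [0..<i] @ i # [Suc i..<length us]"
  proof -
    have "[0..<length us] = [0..<i + (length us - i)]" using assms by simp
    also have "\<dots> = [0..<i] @ [i..<i + (length us - i)]" by (rule upt_add_eq_append) simp
    also have "[i..<i + (length us - i)] = i # [Suc i..<length us]" using assms by (simp add: upt_conv_Cons)
    finally show ?thesis .
  qed
  then show ?thesis unfolding Wword_def pre_def suf_def blk_def by simp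
qed

lemma pre_upd: "pre al0 us als \<omega> (Z[i := v]) i = pre al0 us als \<omega> Z i"
  unfolding pre_def blk_def by (rule arg_cong[where f="\<lambda>x. al0 @ concat x"], rule map_cong) auto

lemma suf_upd: "suf us als \<omega> (Z[i := v]) i = suf us als \<omega> Z i"
  unfolding suf_def blk_def by (rule arg_cong[where f="\<lambda>x. als ! i @ concat x"], rule map_cong) auto

lemma mu_blk:
  assumes mm: "monoid_morphism mu" and idem: "\<forall>x::'m::monoid_mult. x ^ \<omega> * x ^ \<omega> = x ^ \<omega>"
    and "Z ! j \<ge> 1"
  shows "mu (blk us als \<omega> Z j) = (mu (us ! j) :: 'm) ^ \<omega> * mu (als ! j)"
  unfolding blk_def using assms by (simp add: mu_app mu_wpow pow_mult_idem)

lemma mu_pre: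
  assumes mm: "monoid_morphism mu" and idem: "\<forall>x::'m::monoid_mult. x ^ \<omega> * x ^ \<omega> = x ^ \<omega>"
    and "\<forall>j<length us. Z ! j \<ge> 1" "\<forall>j<length us. Z' ! j \<ge> 1" "i < length us"
  shows "(mu :: _ \<Rightarrow> 'm) (pre al0 us als \<omega> Z i) = mu (pre al0 us als \<omega> Z' i)"
proof -
  have "mu (concat (map (blk us als \<omega> Z) [0..<i])) = (mu :: _ \<Rightarrow> 'm) (concat (map (blk us als \<omega> Z') [0..<i]))"
    by (rule mu_concat_map_eq[OF mm]) (use assms in \<open>simp add: mu_blk[OF mm idem]\<close>)
  then show ?thesis unfolding pre_def by (simp add: mu_app[OF mm])
qed

lemma mu_suf:
  assumes mm: "monoid_morphism mu" and idem: "\<forall>x::'m::monoid_mult. x ^ \<omega> * x ^ \<omega> = x ^ \<omega>"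
    and "\<forall>j<length us. Z ! j \<ge> 1" "\<forall>j<length us. Z' ! j \<ge> 1" "i < length us"
  shows "(mu :: _ \<Rightarrow> 'm) (suf us als \<omega> Z i) = mu (suf us als \<omega> Z' i)"
proof -
  have "mu (concat (map (blk us als \<omega> Z) [Suc i..<length us])) = (mu :: _ \<Rightarrow> 'm) (concat (map (blk us als \<omega> Z') [Suc i..<length us]))"
    by (rule mu_concat_map_eq[OF mm]) (use assms in \<open>simp add: mu_blk[OF mm idem]\<close>)
  then show ?thesis unfolding suf_def by (simp add: mu_app[OF mm])
qed

lemma mu_W:
  assumes mm: "monoid_morphism mu" and idem: "\<forall>x::'m::monoid_mult. x ^ \<omega> * x ^ \<omega> = x ^ \<omega>"
    and "\<forall>j<length us. Z ! j \<ge> 1" "\<forall>j<length us. Z' ! j \<ge> 1"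
  shows "(mu :: _ \<Rightarrow> 'm) (Wword al0 us als \<omega> Z) = mu (Wword al0 us als \<omega> Z')"
proof -
  have "mu (concat (map (blk us als \<omega> Z) [0..<length us])) = (mu :: _ \<Rightarrow> 'm) (concat (map (blk us als \<omega> Z') [0..<length us]))"
    by (rule mu_concat_map_eq[OF mm]) (use assms in \<open>simp add: mu_blk[OF mm idem]\<close>)
  then show ?thesis unfolding Wword_def blk_def[symmetric] by (simp add: mu_app[OF mm])
qed



lemma key1:
  assumes idem: "(m::'m::monoid_mult) ^ \<omega> * m ^ \<omega> = m ^ \<omega>" and "\<omega> \<ge> 1"
  shows "m ^ (2*\<omega>-1) * (m * (m ^ (\<omega>-1) * z)) = m ^ (2*\<omega>-1) * z"
proof -
  have e: "2*\<omega>-1 = \<omega> + (\<omega>-1)" using assms(2) by simp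
  have e2: "\<omega> = Suc (\<omega>-1)" using assms(2) by simp
  have a: "m ^ (2*\<omega>-1) = m ^ \<omega> * m ^ (\<omega>-1)" by (simp only: e power_add)
  have c: "m ^ (\<omega>-1) * m = m ^ \<omega>" by (metis power_Suc2 e2)
  have "m ^ (2*\<omega>-1) * (m * (m ^ (\<omega>-1) * z)) = m ^ \<omega> * (m ^ (\<omega>-1) * m) * (m ^ (\<omega>-1) * z)"
    by (simp only: a mult.assoc)
  also have "\<dots> = (m ^ \<omega> * m ^ \<omega>) * (m ^ (\<omega>-1) * z)" by (simp only: c)
  also have "\<dots> = m ^ (2*\<omega>-1) * z" by (simp only: idem a mult.assoc)
  finally show ?thesis .
qed

lemma key2:
  assumes idem: "(m::'m::monoid_mult) ^ \<omega> * m ^ \<omega> = m ^ \<omega>" and "\<omega> \<ge> 1"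
  shows "m ^ (\<omega>-1) * (m * (m ^ \<omega> * z)) = m ^ \<omega> * z"
proof -
  have e2: "\<omega> = Suc (\<omega>-1)" using assms(2) by simp
  have c: "m ^ (\<omega>-1) * m = m ^ \<omega>" by (metis power_Suc2 e2)
  have "m ^ (\<omega>-1) * (m * (m ^ \<omega> * z)) = ((m ^ (\<omega>-1) * m) * m ^ \<omega>) * z" by (simp only: mult.assoc)
  also have "\<dots> = m ^ \<omega> * z" by (simp only: c idem)
  finally show ?thesis .
qed

lemma XXstop: True by simp



lemma swap:
  fixes mu :: "'a list \<Rightarrow> 'm::monoid_mult" and al0 \<alpha> \<beta> :: "'a list" and als us :: "'a list list"
  assumes mm: "monoid_morphism mu" and idem: "\<forall>x::'m. x ^ \<omega> * x ^ \<omega> = x ^ \<omega>"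
    and om: "\<omega> \<ge> 1" and i: "i < length us"
    and X1: "\<forall>j<length us. X ! j \<ge> 1" and Y1: "\<forall>j<length us. Y ! j \<ge> 1"
    and X2: "X ! i \<ge> 2" and Y2: "Y ! i \<ge> 2"
    and lX: "length X = length us" and lY: "length Y = length us"
  defines "W \<equiv> Wword al0 us als \<omega>"
  defines "w \<equiv> W (replicate (length us) 1)"
  defines "word \<equiv> \<lambda>X Y. \<alpha> @ wpow w (2*\<omega>-1) @ W X @ wpow w (\<omega>-1) @ W Y @ wpow w \<omega> @ \<beta>"
  shows "bf mu lam 1 1 (word (X[i := X!i+1]) Y) = bf mu lam 1 1 (word X (Y[i := Y!i+1]))"
proof -
  define u where "u = us ! i"
  define n where "n = X ! i"
  define n' where "n' = Y ! i"
  define P where "P = \<alpha> @ wpow w (2*\<omega>-1) @ pre al0 us als \<omega> X i"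
  define Q where "Q = suf us als \<omega> X i @ wpow w (\<omega>-1) @ W Y @ wpow w \<omega> @ \<beta>"
  define P' where "P' = \<alpha> @ wpow w (2*\<omega>-1) @ W X @ wpow w (\<omega>-1) @ pre al0 us als \<omega> Y i"
  define Q' where "Q' = suf us als \<omega> Y i @ wpow w \<omega> @ \<beta>"
  have e1: "word (X[i := n+1]) Y = P @ wpow u (\<omega>*(n+1)) @ Q"
    unfolding word_def P_def Q_def W_def W_split[OF i, of al0 als \<omega> "X[i := n+1]"] pre_upd suf_upd
    using i lX by (simp add: u_def)
  have e0: "word X Y = P @ wpow u (\<omega>*n) @ Q"
    unfolding word_def P_def Q_def W_def W_split[OF i, of al0 als \<omega> X]
    by (simp add: u_def n_def)
  have e0': "word X Y = P' @ wpow u (\<omega>*n') @ Q'"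
    unfolding word_def P'_def Q'_def W_def W_split[OF i, of al0 als \<omega> Y]
    by (simp add: u_def n'_def)
  have e1': "word X (Y[i := n'+1]) = P' @ wpow u (\<omega>*(n'+1)) @ Q'"
    unfolding word_def P'_def Q'_def W_def W_split[OF i, of al0 als \<omega> "Y[i := n'+1]"] pre_upd suf_upd
    using i lY by (simp add: u_def)
  have mw: "mu (wpow u (\<omega>*k)) = mu u ^ \<omega>" if "k \<ge> 1" for k
    by (simp add: mu_wpow[OF mm] pow_mult_idem[OF idem that])
  define S where "S = (\<lambda>l r. bf mu lam (l * mu u ^ \<omega>) (mu u ^ \<omega> * r) (wpow u \<omega>))"
  have "bf mu lam 1 1 (word (X[i := n+1]) Y) = bf mu lam 1 1 (word X Y) + S (1 * mu P) (mu Q * 1)"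
  proof -
    have "n \<ge> 2" "n \<ge> 1" "n + 1 \<ge> 1" using X2 n_def by auto
    note inc = increment[OF mm idem \<open>n \<ge> 2\<close>, of lam "1 * mu P" "mu Q * 1" u]
    show ?thesis unfolding e1 e0 bf3[OF mm] S_def mw[OF \<open>n \<ge> 1\<close>] mw[OF \<open>n + 1 \<ge> 1\<close>] inc
      by simp
  qed
  moreover have "bf mu lam 1 1 (word X (Y[i := n'+1])) = bf mu lam 1 1 (word X Y) + S (1 * mu P') (mu Q' * 1)"
  proof -
    have "n' \<ge> 2" "n' \<ge> 1" "n' + 1 \<ge> 1" using Y2 n'_def by auto
    note inc = increment[OF mm idem \<open>n' \<ge> 2\<close>, of lam "1 * mu P'" "mu Q' * 1" u]
    show ?thesis unfolding e1' e0' bf3[OF mm] S_def mw[OF \<open>n' \<ge> 1\<close>] mw[OF \<open>n' + 1 \<ge> 1\<close>] inc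
      by simp
  qed
  moreover have "mu P = mu P'"
  proof -
    have r1: "\<forall>j<length us. replicate (length us) 1 ! j \<ge> (1::nat)" by simp
    have "mu (W X) = mu w" unfolding W_def w_def using mu_W[OF mm idem X1 r1] .
    moreover have "mu (pre al0 us als \<omega> X i) = mu (pre al0 us als \<omega> Y i)"
      using mu_pre[OF mm idem X1 Y1 i] .
    ultimately show ?thesis unfolding P_def P'_def
      using key1[of "mu w" \<omega>] idem om by (simp add: mu_app[OF mm] mu_wpow[OF mm])
  qed
  moreover have "mu Q = mu Q'"
  proof -
    have r1: "\<forall>j<length us. replicate (length us) 1 ! j \<ge> (1::nat)" by simp
    have "mu (W Y) = mu w" unfolding W_def w_def using mu_W[OF mm idem Y1 r1] .
    moreover have "mu (suf us als \<omega> X i) = mu (suf us als \<omega> Y i)"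
      using mu_suf[OF mm idem X1 Y1 i] .
    ultimately show ?thesis unfolding Q_def Q'_def
      using key2[of "mu w" \<omega>] idem om by (simp add: mu_app[OF mm] mu_wpow[OF mm])
  qed
  ultimately show ?thesis using n_def n'_def by simp
qed



lemma core:
  fixes mu :: "'a list \<Rightarrow> 'm::monoid_mult" and al0 \<alpha> \<beta> :: "'a list" and als us :: "'a list list"
  assumes mm: "monoid_morphism mu" and idem: "\<forall>x::'m. x ^ \<omega> * x ^ \<omega> = x ^ \<omega>"
    and om: "\<omega> \<ge> 1" and k: "length us = k"
  defines "W \<equiv> Wword al0 us als \<omega>"
  defines "w \<equiv> W (replicate k 1)"
  defines "word \<equiv> \<lambda>X Y. \<alpha> @ wpow w (2*\<omega>-1) @ W X @ wpow w (\<omega>-1) @ W Y @ wpow w \<omega> @ \<beta>"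
  shows "length X = k \<Longrightarrow> length Y = k \<Longrightarrow> \<forall>j<k. X!j \<ge> 3 \<Longrightarrow> \<forall>j<k. Y!j \<ge> 3 \<Longrightarrow>
    bf mu lam 1 1 (word X Y) = bf mu lam 1 1 (word (replicate k 3) (map (\<lambda>s. s-3) (map2 (+) X Y)))"
proof (induction "sum_list X" arbitrary: X Y rule: less_induct)
  case less
  show ?case
  proof (cases "\<forall>j<k. X!j = 3")
    case True
    have "X = replicate k 3" using True less.prems by (intro nth_equalityI) auto
    moreover have "map (\<lambda>s. s-3) (map2 (+) X Y) = Y" using True less.prems by (intro nth_equalityI) auto
    ultimately show ?thesis by simp
  next
    case False
    then obtain i where i: "i < k" "X!i \<noteq> 3" by blast
    then have Xi: "X!i \<ge> 4" using less.prems by force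
    define X' where "X' = X[i := X!i - 1]"
    define Y' where "Y' = Y[i := Y!i + 1]"
    have lX': "length X' = k" "length Y' = k" using less.prems X'_def Y'_def by auto
    have X'i: "X'!i = X!i - 1" using i less.prems X'_def by simp
    have XX: "X'[i := X'!i + 1] = X" using X'i Xi X'_def by simp
    have X'3: "\<forall>j<k. X'!j \<ge> 3"
    proof (intro allI impI)
      fix j assume "j < k"
      then show "X'!j \<ge> 3" using less.prems Xi X'_def by (cases "j = i") auto
    qed
    have Y'3: "\<forall>j<k. Y'!j \<ge> 3"
    proof (intro allI impI)
      fix j assume "j < k"
      then show "Y'!j \<ge> 3" using less.prems Y'_def i by (cases "j = i") auto
    qed
    have sw: "bf mu lam 1 1 (word (X'[i := X'!i + 1]) Y) = bf mu lam 1 1 (word X' (Y[i := Y!i + 1]))"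
      unfolding word_def w_def W_def k[symmetric]
      by (rule swap[OF mm idem om]) (use i k X'3 Y'3 less.prems lX' X'i Xi in auto)
    have lt: "sum_list X' < sum_list X"
    proof -
      have "X!i \<le> sum_list X" using i less.prems by (simp add: elem_le_sum_list)
      then show ?thesis using i Xi less.prems X'_def by (simp add: sum_list_update)
    qed
    have ih: "bf mu lam 1 1 (word X' Y') = bf mu lam 1 1 (word (replicate k 3) (map (\<lambda>s. s-3) (map2 (+) X' Y')))"
      using less.hyps[OF lt lX' X'3 Y'3] .
    have meq: "map2 (+) X' Y' = map2 (+) X Y"
      using less.prems i Xi X'_def Y'_def by (intro nth_equalityI) (auto simp: nth_list_update)
    have "bf mu lam 1 1 (word X Y) = bf mu lam 1 1 (word X' Y')"
      using sw unfolding XX Y'_def .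
    also note ih
    finally show ?thesis unfolding meq .
  qed
qed



theorem mainTheorem2:
  fixes mu :: "'a::finite list \<Rightarrow> 'm::{monoid_mult, finite}"
    and lam :: "'m \<Rightarrow> 'a \<Rightarrow> 'm \<Rightarrow> nat"
    and k :: nat
  assumes "monoid_morphism mu"
    and "k \<ge> 1"
  shows "k_repetitive k (bimachine_fun mu lam)"
proof -
  note mm = assms(1)
  obtain w0 :: nat where w0: "w0 \<ge> 1" "\<forall>x::'m. x ^ w0 * x ^ w0 = x ^ w0"
    using finite_idem by blast
  show ?thesis
    unfolding k_repetitive_def Let_def bf_one[OF mm]
  proof (intro exI[of _ w0] conjI allI impI)
    show "1 \<le> w0" by fact
    fix \<alpha> \<beta> al0 :: "'a list" and us als :: "'a list list" and \<omega> :: nat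
    assume lus: "length us = k" and "length als = k" and om0: "0 < \<omega>" and dv: "w0 dvd \<omega>"
    obtain c where c: "\<omega> = w0 * c" using dv by blast
    have "c \<ge> 1" using c om0 by (cases c) auto
    have idem: "\<forall>x::'m. x ^ \<omega> * x ^ \<omega> = x ^ \<omega>"
    proof
      fix x :: 'm
      have "x ^ \<omega> = x ^ w0" unfolding c power_mult using pow_idem w0(2) \<open>c \<ge> 1\<close> by blast
      then show "x ^ \<omega> * x ^ \<omega> = x ^ \<omega>" using w0(2) by simp
    qed
    have om: "\<omega> \<ge> 1" using om0 by simp
    show "\<exists>F. \<forall>X Y. length X = k \<longrightarrow> length Y = k \<longrightarrow> (\<forall>i<k. 3 \<le> X ! i) \<longrightarrow> (\<forall>i<k. 3 \<le> Y ! i) \<longrightarrow>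
             bf mu lam 1 1 (\<alpha> @ wpow (Wword al0 us als \<omega> (replicate k 1)) (2 * \<omega> - 1) @ Wword al0 us als \<omega> X @
               wpow (Wword al0 us als \<omega> (replicate k 1)) (\<omega> - 1) @ Wword al0 us als \<omega> Y @
               wpow (Wword al0 us als \<omega> (replicate k 1)) \<omega> @ \<beta>) = F (map2 (+) X Y)"
      by (rule exI, intro allI impI, rule core[OF mm idem om lus])
  qed
qed

end
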